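(* Let $r\geq 2$ and $0\leq \alpha\leq 1-\frac{1}{r}$. Let $G$ be a graph on $n$ vertices with minimum degree $\delta=\delta(G)$, let $\mathbf{x}=(x_{1}, \dots, x_{n})$ be a non-negative unit eigenvector of $A_{\alpha}(G)$ corresponding to $\lambda_{\alpha}(G)$, and let $x=\min \{x_{1}, \dots, x_{n}\}$. If $x>0$, then $$\lambda_{\alpha}(G)\leq \alpha \delta+ (1-\alpha)\sqrt{\delta^2+\left(\frac{1}{nx^2}-1\right)n\delta}.$$
   Context: $A_\alpha(G)=\alpha D(G)+(1-\alpha)A(G)$, where $A(G)$ is the adjacency matrix and $D(G)$ the diagonal degree matrix; $\lambda_\alpha(G)$ is its largest eigenvalue. *)

theory Defs
  imports Complex_Main
begin

definition simple_graph :: "nat \<Rightarrow> (nat \<Rightarrow> nat \<Rightarrow> bool) \<Rightarrow> bool" where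
  "simple_graph n E \<longleftrightarrow> (\<forall>i j. E i j \<longrightarrow> i < n \<and> j < n) \<and> (\<forall>i j. E i j \<longrightarrow> E j i) \<and> (\<forall>i. \<not> E i i)"

definition degree :: "nat \<Rightarrow> (nat \<Rightarrow> nat \<Rightarrow> bool) \<Rightarrow> nat \<Rightarrow> nat" where
  "degree n E i = card {j. j < n \<and> E i j}"

definition min_degree :: "nat \<Rightarrow> (nat \<Rightarrow> nat \<Rightarrow> bool) \<Rightarrow> nat" where
  "min_degree n E = Min (degree n E ` {..<n})"

definition A_alpha :: "real \<Rightarrow> nat \<Rightarrow> (nat \<Rightarrow> nat \<Rightarrow> bool) \<Rightarrow> nat \<Rightarrow> nat \<Rightarrow> real" where
  "A_alpha \<alpha> n E i j =
     (if i = j then \<alpha> * real (degree n E i) else 0) + (1 - \<alpha>) * (if E i j then 1 else 0)"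

definition is_eigenpair :: "nat \<Rightarrow> (nat \<Rightarrow> nat \<Rightarrow> real) \<Rightarrow> real \<Rightarrow> (nat \<Rightarrow> real) \<Rightarrow> bool" where
  "is_eigenpair n M \<mu> v \<longleftrightarrow> (\<exists>i<n. v i \<noteq> 0) \<and> (\<forall>i<n. (\<Sum>j<n. M i j * v j) = \<mu> * v i)"

definition is_eigenvalue :: "nat \<Rightarrow> (nat \<Rightarrow> nat \<Rightarrow> real) \<Rightarrow> real \<Rightarrow> bool" where
  "is_eigenvalue n M \<mu> \<longleftrightarrow> (\<exists>v. is_eigenpair n M \<mu> v)"

definition lambda_alpha :: "real \<Rightarrow> nat \<Rightarrow> (nat \<Rightarrow> nat \<Rightarrow> bool) \<Rightarrow> real" where
  "lambda_alpha \<alpha> n E = Max {\<mu>. is_eigenvalue n (A_alpha \<alpha> n E) \<mu>}"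

end

theory Submission
  imports Defs "HOL-Analysis.Convex"
begin

theorem lemma4p1:
  fixes r :: nat and \<alpha> :: real and n :: nat and E :: "nat \<Rightarrow> nat \<Rightarrow> bool" and x :: "nat \<Rightarrow> real"
  assumes "r \<ge> 2"
    and "0 \<le> \<alpha>" and "\<alpha> \<le> 1 - 1 / real r"
    and "simple_graph n E"
    and "\<forall>i<n. x i \<ge> 0"
    and "(\<Sum>i<n. (x i)\<^sup>2) = 1"
    and "is_eigenpair n (A_alpha \<alpha> n E) (lambda_alpha \<alpha> n E) x"
    and "Min (x ` {..<n}) > 0"
  shows "lambda_alpha \<alpha> n E
           \<le> \<alpha> * real (min_degree n E)
             + (1 - \<alpha>) * sqrt ((real (min_degree n E))\<^sup>2
                 + (1 / (real n * (Min (x ` {..<n}))\<^sup>2) - 1) * real n * real (min_degree n E))"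
proof -
  define m where "m = Min (x ` {..<n})"
  define d where "d = min_degree n E"
  define \<mu> where "\<mu> = lambda_alpha \<alpha> n E"
  have m0: "m > 0" using assms(8) m_def by simp
  have n0: "n > 0" using assms(7) unfolding is_eigenpair_def by auto
  have xm: "\<And>i. i < n \<Longrightarrow> m \<le> x i" unfolding m_def by (rule Min_le) auto
  have a1: "1 - \<alpha> > 0"
  proof -
    have "real r \<ge> 2" using assms(1) by simp
    then have "1 / real r > 0" by simp
    then show ?thesis using assms(3) by linarith
  qed
  obtain u where u: "u < n" "degree n E u = d"
  proof -
    have "d \<in> degree n E ` {..<n}" unfolding d_def min_degree_def
      using n0 by (intro Min_in) auto
    then show ?thesis using that by auto
  qed
  define N where "N = {j. j < n \<and> E u j}"
  have Nsub: "N \<subseteq> {..<n}" unfolding N_def by auto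
  have finN: "finite N" using Nsub finite_subset by blast
  have cardN: "card N = d" using u unfolding N_def degree_def by simp
  define S where "S = (\<Sum>j\<in>N. x j)"
  have S0: "S \<ge> 0" unfolding S_def using assms(5) Nsub by (intro sum_nonneg) auto
  have eig: "(\<Sum>j<n. A_alpha \<alpha> n E u j * x j) = \<mu> * x u"
    using assms(7) u(1) unfolding is_eigenpair_def \<mu>_def by blast
  have "(\<Sum>j<n. A_alpha \<alpha> n E u j * x j)
      = (\<Sum>j<n. (if u = j then \<alpha> * real d * x j else 0)) + (1 - \<alpha>) * (\<Sum>j<n. (if E u j then x j else 0))"
  proof -
    have "\<And>j. A_alpha \<alpha> n E u j * x j = (if u = j then \<alpha> * real d * x j else 0) + (1 - \<alpha>) * (if E u j then x j else 0)"
      unfolding A_alpha_def using u(2) by (auto simp: algebra_simps)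
    then show ?thesis by (simp add: sum.distrib sum_distrib_left)
  qed
  also have "\<dots> = \<alpha> * real d * x u + (1 - \<alpha>) * S"
    using u(1) unfolding S_def N_def by (simp add: sum.If_cases Int_def conj_commute)
  finally have key: "(\<mu> - \<alpha> * real d) * x u = (1 - \<alpha>) * S" using eig by (simp add: algebra_simps)
  have xu: "x u \<ge> m" using xm u(1) .
  have xu0: "x u > 0" using xu m0 by linarith
  have cs: "S\<^sup>2 \<le> (\<Sum>j\<in>N. (x j)\<^sup>2) * real d"
    unfolding S_def using sum_squared_le_sum_of_squares[of x N] cardN by simp
  have split: "(\<Sum>j<n. (x j)\<^sup>2) = (\<Sum>j\<in>N. (x j)\<^sup>2) + (\<Sum>j\<in>{..<n}-N. (x j)\<^sup>2)"
    using Nsub by (metis add.commute finite_lessThan sum.subset_diff)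
  have "(\<Sum>j\<in>{..<n}-N. (x j)\<^sup>2) \<ge> (\<Sum>j\<in>{..<n}-N. m\<^sup>2)"
    using xm m0 by (intro sum_mono power_mono) auto
  moreover have "card ({..<n}-N) = n - d" using Nsub finN cardN by (simp add: card_Diff_subset)
  moreover have "d \<le> n" using card_mono[OF finite_lessThan Nsub] cardN by simp
  ultimately have rest: "(\<Sum>j\<in>{..<n}-N. (x j)\<^sup>2) \<ge> (real n - real d) * m\<^sup>2" by simp
  have sq: "(\<Sum>j\<in>N. (x j)\<^sup>2) \<le> 1 - (real n - real d) * m\<^sup>2"
    using split rest assms(6) by linarith
  have nm: "real n * m\<^sup>2 \<le> 1"
  proof -
    have "(\<Sum>j<n. m\<^sup>2) \<le> (\<Sum>j<n. (x j)\<^sup>2)" using xm m0 by (intro sum_mono power_mono) auto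
    then show ?thesis using assms(6) by simp
  qed
  define T where "T = (real d)\<^sup>2 + (1 / (real n * m\<^sup>2) - 1) * real n * real d"
  have Teq: "T * m\<^sup>2 = real d * (1 - (real n - real d) * m\<^sup>2)"
    unfolding T_def using m0 n0 by (simp add: field_simps power2_eq_square)
  have T0: "T \<ge> 0"
  proof -
    have "1 - (real n - real d) * m\<^sup>2 \<ge> 0" using nm m0 by (simp add: algebra_simps add_increasing2)
    then have "T * m\<^sup>2 \<ge> 0" using Teq by simp
    then show ?thesis using m0 by (simp add: zero_le_mult_iff)
  qed
  have "S\<^sup>2 \<le> T * m\<^sup>2" proof -
    have "(\<Sum>j\<in>N. (x j)\<^sup>2) * real d \<le> (1 - (real n - real d) * m\<^sup>2) * real d"
      using sq by (intro mult_right_mono) auto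
    then show ?thesis using cs Teq by (simp add: mult.commute)
  qed
  also have "\<dots> \<le> T * (x u)\<^sup>2" using T0 xu m0 by (intro mult_left_mono power_mono) auto
  finally have S2: "S\<^sup>2 \<le> T * (x u)\<^sup>2" .
  have "S \<le> sqrt T * x u"
  proof -
    have "sqrt (S\<^sup>2) \<le> sqrt (T * (x u)\<^sup>2)" using S2 by (rule real_sqrt_le_mono)
    then show ?thesis using S0 xu0 by (simp add: real_sqrt_mult)
  qed
  then have "(1 - \<alpha>) * S \<le> (1 - \<alpha>) * sqrt T * x u" using a1 by (simp add: mult_left_mono)
  then have "(\<mu> - \<alpha> * real d) * x u \<le> ((1 - \<alpha>) * sqrt T) * x u" using key by simp
  then have "\<mu> - \<alpha> * real d \<le> (1 - \<alpha>) * sqrt T" using xu0 by simp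
  then show ?thesis unfolding \<mu>_def T_def d_def m_def by simp
qed

end
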